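(* Let $\Lambda$ be a row-finite $k$-graph with no sources. (1) If $\Lambda$ is strongly connected then $\Lambda$ is cofinal. (2) If $\Lambda$ is cofinal, has no sinks and $\Lambda^0$ is finite, then $\Lambda$ is strongly connected.
   Context: A $k$-graph is a countable category $\Lambda$ with a functor $d:\Lambda\to\mathbb{N}^k$ with unique factorisation; $\Lambda^n=d^{-1}(n)$, $\Lambda^0$ = vertices, $uXv=\{\lambda\in X:r(\lambda)=u,s(\lambda)=v\}$. Row-finite: $v\Lambda^n$ finite; no sources: $v\Lambda^n\ne\emptyset$ for $n\ne0$; no sinks: $\Lambda^nv\ne\emptyset$ for $n\ne0$. For $N\in\mathbb{N}^k$, $N>0$ means $N_i>0$ for all $i$. $\Lambda$ is strongly connected if for all $u,v\in\Lambda^0$ there is $N>0$ with $u\Lambda^Nv\ne\emptyset$. $\Lambda$ is cofinal if for all $v,w\in\Lambda^0$ there is $N\in\mathbb{N}^k$ such that $v\Lambda s(\alpha)\ne\emptyset$ for every $\alpha\in w\Lambda^N$. *)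

theory Defs
  imports Main "HOL-Library.Countable_Set"
begin

text \<open>Degrees: elements of N^k are represented as functions nat => nat vanishing
  from index k on. Addition in N^k is pointwise.\<close>

definition in_Nk :: "nat \<Rightarrow> (nat \<Rightarrow> nat) \<Rightarrow> bool" where
  "in_Nk k n \<longleftrightarrow> (\<forall>i\<ge>k. n i = 0)"

definition deg_add :: "(nat \<Rightarrow> nat) \<Rightarrow> (nat \<Rightarrow> nat) \<Rightarrow> (nat \<Rightarrow> nat)" where
  "deg_add m n = (\<lambda>i. m i + n i)"

definition deg_pos :: "nat \<Rightarrow> (nat \<Rightarrow> nat) \<Rightarrow> bool" where
  "deg_pos k n \<longleftrightarrow> (\<forall>i<k. 0 < n i)"

text \<open>A k-graph: a countable category with morphism set L, range/source maps r, s
  (returning identity morphisms), partial composition c (c x y = x y, defined when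
  s x = r y), and a degree functor d : L -> N^k with unique factorisation.\<close>

definition is_kgraph ::
  "nat \<Rightarrow> 'a set \<Rightarrow> ('a \<Rightarrow> 'a) \<Rightarrow> ('a \<Rightarrow> 'a) \<Rightarrow> ('a \<Rightarrow> 'a \<Rightarrow> 'a) \<Rightarrow> ('a \<Rightarrow> nat \<Rightarrow> nat) \<Rightarrow> bool"
where
  "is_kgraph k L r s c d \<longleftrightarrow>
     countable L \<and>
     (\<forall>x\<in>L. r x \<in> L \<and> s x \<in> L \<and> r (r x) = r x \<and> s (r x) = r x
              \<and> r (s x) = s x \<and> s (s x) = s x) \<and>
     (\<forall>x\<in>L. \<forall>y\<in>L. s x = r y \<longrightarrow> c x y \<in> L \<and> r (c x y) = r x \<and> s (c x y) = s y) \<and>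
     (\<forall>x\<in>L. c (r x) x = x \<and> c x (s x) = x) \<and>
     (\<forall>x\<in>L. \<forall>y\<in>L. \<forall>z\<in>L. s x = r y \<longrightarrow> s y = r z \<longrightarrow> c (c x y) z = c x (c y z)) \<and>
     (\<forall>x\<in>L. in_Nk k (d x)) \<and>
     (\<forall>x\<in>L. d (r x) = (\<lambda>_. 0)) \<and>
     (\<forall>x\<in>L. \<forall>y\<in>L. s x = r y \<longrightarrow> d (c x y) = deg_add (d x) (d y)) \<and>
     (\<forall>x\<in>L. \<forall>m n. d x = deg_add m n \<longrightarrow>
        (\<exists>!p. fst p \<in> L \<and> snd p \<in> L \<and> s (fst p) = r (snd p) \<and>
              d (fst p) = m \<and> d (snd p) = n \<and> c (fst p) (snd p) = x))"

definition kvertices :: "'a set \<Rightarrow> ('a \<Rightarrow> nat \<Rightarrow> nat) \<Rightarrow> 'a set" where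
  "kvertices L d = {x\<in>L. d x = (\<lambda>_. 0)}"

definition paths_from :: "'a set \<Rightarrow> ('a \<Rightarrow> 'a) \<Rightarrow> ('a \<Rightarrow> nat \<Rightarrow> nat) \<Rightarrow> 'a \<Rightarrow> (nat \<Rightarrow> nat) \<Rightarrow> 'a set" where
  "paths_from L r d v n = {x\<in>L. r x = v \<and> d x = n}"

definition paths_to :: "'a set \<Rightarrow> ('a \<Rightarrow> 'a) \<Rightarrow> ('a \<Rightarrow> nat \<Rightarrow> nat) \<Rightarrow> (nat \<Rightarrow> nat) \<Rightarrow> 'a \<Rightarrow> 'a set" where
  "paths_to L s d n v = {x\<in>L. s x = v \<and> d x = n}"

definition paths_between :: "'a set \<Rightarrow> ('a \<Rightarrow> 'a) \<Rightarrow> ('a \<Rightarrow> 'a) \<Rightarrow> ('a \<Rightarrow> nat \<Rightarrow> nat) \<Rightarrow> 'a \<Rightarrow> (nat \<Rightarrow> nat) \<Rightarrow> 'a \<Rightarrow> 'a set" where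
  "paths_between L r s d u n v = {x\<in>L. r x = u \<and> d x = n \<and> s x = v}"

definition row_finite where
  "row_finite k L r d \<longleftrightarrow> (\<forall>v\<in>kvertices L d. \<forall>n. in_Nk k n \<longrightarrow> finite (paths_from L r d v n))"

definition no_sources where
  "no_sources k L r d \<longleftrightarrow> (\<forall>v\<in>kvertices L d. \<forall>n. in_Nk k n \<longrightarrow> n \<noteq> (\<lambda>_. 0) \<longrightarrow> paths_from L r d v n \<noteq> {})"

definition no_sinks where
  "no_sinks k L s d \<longleftrightarrow> (\<forall>v\<in>kvertices L d. \<forall>n. in_Nk k n \<longrightarrow> n \<noteq> (\<lambda>_. 0) \<longrightarrow> paths_to L s d n v \<noteq> {})"

definition strongly_connected where
  "strongly_connected k L r s d \<longleftrightarrow>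
     (\<forall>u\<in>kvertices L d. \<forall>v\<in>kvertices L d. \<exists>N. in_Nk k N \<and> deg_pos k N \<and> paths_between L r s d u N v \<noteq> {})"

definition cofinal where
  "cofinal k L r s d \<longleftrightarrow>
     (\<forall>v\<in>kvertices L d. \<forall>w\<in>kvertices L d. \<exists>N. in_Nk k N \<and>
        (\<forall>a\<in>paths_from L r d w N. {x\<in>L. r x = v \<and> s x = s a} \<noteq> {}))"

end

theory Submission
  imports Defs
begin

lemma kg:
  assumes "is_kgraph k L r s c d"
  shows kg_r: "\<And>x. x\<in>L \<Longrightarrow> r x \<in> L \<and> s x \<in> L \<and> r (r x) = r x \<and> s (r x) = r x
              \<and> r (s x) = s x \<and> s (s x) = s x"
  and kg_c: "\<And>x y. x\<in>L \<Longrightarrow> y\<in>L \<Longrightarrow> s x = r y \<Longrightarrow> c x y \<in> L \<and> r (c x y) = r x \<and> s (c x y) = s y"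
  and kg_id: "\<And>x. x\<in>L \<Longrightarrow> c (r x) x = x \<and> c x (s x) = x"
  and kg_nk: "\<And>x. x\<in>L \<Longrightarrow> in_Nk k (d x)"
  and kg_dr: "\<And>x. x\<in>L \<Longrightarrow> d (r x) = (\<lambda>_. 0)"
  and kg_dc: "\<And>x y. x\<in>L \<Longrightarrow> y\<in>L \<Longrightarrow> s x = r y \<Longrightarrow> d (c x y) = deg_add (d x) (d y)"
  and kg_uf: "\<And>x m n. x\<in>L \<Longrightarrow> d x = deg_add m n \<Longrightarrow>
        (\<exists>!p. fst p \<in> L \<and> snd p \<in> L \<and> s (fst p) = r (snd p) \<and>
              d (fst p) = m \<and> d (snd p) = n \<and> c (fst p) (snd p) = x)"
  using assms unfolding is_kgraph_def by blast+

lemma deg0_vertex: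
  assumes K: "is_kgraph k L r s c d" and a: "a \<in> L" and da: "d a = (\<lambda>_. 0)"
  shows "r a = a \<and> s a = a"
proof -
  have z: "d a = deg_add (\<lambda>_. 0) (\<lambda>_. 0)" using da by (simp add: deg_add_def)
  have U: "\<exists>!p. fst p \<in> L \<and> snd p \<in> L \<and> s (fst p) = r (snd p) \<and>
              d (fst p) = (\<lambda>_. 0) \<and> d (snd p) = (\<lambda>_. 0) \<and> c (fst p) (snd p) = a"
    using K a z unfolding is_kgraph_def by blast
  have ra: "r a \<in> L" "s a \<in> L" "s (r a) = r a" "r (s a) = s a" "d (r a) = (\<lambda>_. 0)"
    "c (r a) a = a" "c a (s a) = a"
    using K a unfolding is_kgraph_def by auto
  have ds: "d (s a) = (\<lambda>_. 0)"
  proof -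
    have "d (r (s a)) = (\<lambda>_. 0)" using K ra(2) unfolding is_kgraph_def by blast
    then show ?thesis using ra(4) by simp
  qed
  have "(r a, a) = (a, s a)"
    using U ra ds da a by (metis fst_conv snd_conv)
  then show ?thesis using ra by auto
qed

theorem proposition4p5:
  fixes k :: nat and L :: "'a set" and r s :: "'a \<Rightarrow> 'a"
    and c :: "'a \<Rightarrow> 'a \<Rightarrow> 'a" and d :: "'a \<Rightarrow> nat \<Rightarrow> nat"
  assumes "is_kgraph k L r s c d" and "row_finite k L r d" and "no_sources k L r d"
  shows "(strongly_connected k L r s d \<longrightarrow> cofinal k L r s d)
     \<and> (cofinal k L r s d \<and> no_sinks k L s d \<and> finite (kvertices L d)
          \<longrightarrow> strongly_connected k L r s d)"
proof (intro conjI impI)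
  note K = assms(1)
  assume SC: "strongly_connected k L r s d"
  show "cofinal k L r s d"
    unfolding cofinal_def
  proof (intro ballI)
    fix v w assume v: "v \<in> kvertices L d" and w: "w \<in> kvertices L d"
    have "\<exists>N. in_Nk k N \<and> deg_pos k N \<and> paths_between L r s d v N w \<noteq> {}"
      using SC v w unfolding strongly_connected_def by blast
    then obtain N x where "x \<in> paths_between L r s d v N w" by blast
    then have "x \<in> L" "r x = v" "s x = w" unfolding paths_between_def by auto
    moreover have "in_Nk k (\<lambda>_. 0)" by (simp add: in_Nk_def)
    moreover have "\<forall>a\<in>paths_from L r d w (\<lambda>_. 0). s a = w"
    proof
      fix a assume "a \<in> paths_from L r d w (\<lambda>_. 0)"
      then have "a \<in> L" "r a = w" "d a = (\<lambda>_. 0)" unfolding paths_from_def by auto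
      then show "s a = w" using deg0_vertex[OF K] by metis
    qed
    ultimately show "\<exists>N. in_Nk k N \<and>
        (\<forall>a\<in>paths_from L r d w N. {x\<in>L. r x = v \<and> s x = s a} \<noteq> {})"
      by (intro exI[of _ "\<lambda>_. 0"]) auto
  qed
next
  note K = assms(1)
  assume A: "cofinal k L r s d \<and> no_sinks k L s d \<and> finite (kvertices L d)"
  then have CF: "cofinal k L r s d" and NS: "no_sinks k L s d" and FV: "finite (kvertices L d)"
    by auto
  show "strongly_connected k L r s d"
    unfolding strongly_connected_def
  proof (intro ballI)
    fix u v assume u: "u \<in> kvertices L d" and v: "v \<in> kvertices L d"
    have "\<forall>x\<in>kvertices L d. \<exists>N. in_Nk k N \<and>
        (\<forall>a\<in>paths_from L r d x N. {y\<in>L. r y = u \<and> s y = s a} \<noteq> {})"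
      using CF u unfolding cofinal_def by blast
    then obtain NN where NN0: "\<forall>x \<in> kvertices L d. in_Nk k (NN x) \<and>
        (\<forall>a\<in>paths_from L r d x (NN x). {y\<in>L. r y = u \<and> s y = s a} \<noteq> {})"
      by (rule bchoice[elim_format]) blast
    have NN: "\<And>x. x \<in> kvertices L d \<Longrightarrow> in_Nk k (NN x) \<and>
        (\<forall>a\<in>paths_from L r d x (NN x). {y\<in>L. r y = u \<and> s y = s a} \<noteq> {})"
      using NN0 by blast
    define m where "m = 1 + (\<Sum>x\<in>kvertices L d. \<Sum>i<k. NN x i)"
    have Nle: "NN x i < m" if "x \<in> kvertices L d" "i < k" for x i
    proof -
      have "NN x i \<le> (\<Sum>i<k. NN x i)"
        using that by (intro member_le_sum) auto
      also have "\<dots> \<le> (\<Sum>x\<in>kvertices L d. \<Sum>i<k. NN x i)"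
        using that FV by (intro member_le_sum) auto
      finally show ?thesis unfolding m_def by simp
    qed
    define D where "D = (\<lambda>i. if i < k then m else 0)"
    have DN: "in_Nk k D" unfolding D_def in_Nk_def by simp
    obtain lam where lam: "lam \<in> L" "s lam = v" "d lam = D"
    proof (cases "k = 0")
      case True
      then have "D = (\<lambda>_. 0)" unfolding D_def by simp
      moreover have "v \<in> L" "d v = (\<lambda>_. 0)" using v unfolding kvertices_def by auto
      moreover have "s v = v" using deg0_vertex[OF K] calculation(2,3) by blast
      ultimately show ?thesis using that by metis
    next
      case False
      then have "D 0 = m" unfolding D_def by simp
      then have "D 0 \<noteq> 0" unfolding m_def by simp
      then have "D \<noteq> (\<lambda>_. 0)" by auto
      then show ?thesis using NS v DN that unfolding no_sinks_def paths_to_def by blast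
    qed
    define x where "x = r lam"
    have xv: "x \<in> kvertices L d"
      using kg_r[OF K lam(1)] kg_dr[OF K lam(1)] unfolding x_def kvertices_def by auto
    define N where "N = NN x"
    have NNk: "in_Nk k N" using NN[OF xv] N_def by blast
    define E where "E = (\<lambda>i. D i - N i)"
    have DE: "d lam = deg_add N E"
      unfolding lam(3) deg_add_def E_def
    proof
      fix i show "D i = N i + (D i - N i)"
        using Nle[OF xv, of i] NNk unfolding N_def D_def in_Nk_def
        by (cases "i < k") auto
    qed
    have "\<exists>!p. fst p \<in> L \<and> snd p \<in> L \<and> s (fst p) = r (snd p) \<and>
              d (fst p) = N \<and> d (snd p) = E \<and> c (fst p) (snd p) = lam"
      using kg_uf[OF K lam(1) DE] .
    then obtain al be where ab: "al \<in> L" "be \<in> L" "s al = r be" "d al = N" "d be = E"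
      "c al be = lam" by (metis fst_conv snd_conv)
    have ral: "r al = x" "s be = v"
      using kg_c[OF K ab(1,2,3)] ab(6) lam unfolding x_def by metis+
    have "al \<in> paths_from L r d x N" unfolding paths_from_def using ab ral by simp
    then obtain mu where mu: "mu \<in> L" "r mu = u" "s mu = s al"
      using NN[OF xv] N_def by blast
    define p where "p = c mu be"
    have mb: "s mu = r be" using mu ab by simp
    have pL: "p \<in> L" "r p = u" "s p = v" "d p = deg_add (d mu) E"
      using kg_c[OF K mu(1) ab(2) mb] kg_dc[OF K mu(1) ab(2) mb] mu ab ral unfolding p_def by auto
    have "in_Nk k (d p)" using kg_nk[OF K pL(1)] .
    moreover have "deg_pos k (d p)"
      unfolding deg_pos_def pL(4) deg_add_def E_def D_def
      using Nle[OF xv] N_def by auto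
    ultimately show "\<exists>N. in_Nk k N \<and> deg_pos k N \<and> paths_between L r s d u N v \<noteq> {}"
      using pL unfolding paths_between_def by blast
  qed
qed

end
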